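(* Let $n\ge3$, $m_1,\dots,m_n>0$, and let $\varphi_1,\dots,\varphi_n$ be the longitudes of a fixed-point configuration of the masses on the equator. Let $H,G$ be the $n\times n$ matrices with entries (for $i\ne j$) $H_{ij}=\frac{m_im_j}{\sin^3d_{ij}}$, $H_{ii}=-\sum_{j\neq i}H_{ij}\cos d_{ij}$, $G_{ij}=\frac{-2m_im_j\cos d_{ij}}{\sin^3 d_{ij}}$, $G_{ii}=-\sum_{j\neq i}G_{ij}$, and let $v_1,v_2,v_3\in\mathbb R^n$ have entries $(v_1)_i=\cos d_{1i}=\cos(\varphi_i-\varphi_1)$, $(v_2)_i=\sin(\varphi_i-\varphi_1)$, $(v_3)_i=1$ (with $d_{11}=0$). Then $Hv_1=0$, $Hv_2=0$ and $Gv_3=0$.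
   Context: Masses lie on the equator of the unit sphere at longitudes $\varphi_i$, with geodesic distances $d_{ij}\in(0,\pi)$ for $i\ne j$ (on the equator $\cos d_{ij}=\cos(\varphi_i-\varphi_j)$). The force function is $V=\sum_{i<j}m_im_j\cot d_{ij}$, and a fixed point is a critical point of $V$ on the configuration space $\{d_{ij}\notin\{0,\pi\}\}\subset(\mathbb S^2)^n$. (The matrices $H$ and $G$ are the Hessians of $V$ with respect to the colatitudes $\theta_i$ and to the longitudes $\varphi_i$ at the configuration.) *)

theory Defs
  imports "HOL-Analysis.Analysis"
begin

text \<open>Cosine of the geodesic distance between points with colatitudes th and
 longitudes ph (spherical coordinates on the unit sphere).\<close>
definition cosdist :: "real^'n \<Rightarrow> real^'n \<Rightarrow> 'n \<Rightarrow> 'n \<Rightarrow> real" where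
  "cosdist th ph i j = cos (th$i) * cos (th$j) + sin (th$i) * sin (th$j) * cos (ph$i - ph$j)"

definition geodist :: "real^'n \<Rightarrow> real^'n \<Rightarrow> 'n \<Rightarrow> 'n \<Rightarrow> real" where
  "geodist th ph i j = arccos (cosdist th ph i j)"

text \<open>Force function V = sum over i<j of m_i m_j cot d_ij, written as half the
 sum over ordered pairs i \<noteq> j.\<close>
definition forceV :: "real^'n \<Rightarrow> real^'n \<Rightarrow> real^'n \<Rightarrow> real" where
  "forceV m th ph = (\<Sum>i\<in>UNIV. \<Sum>j\<in>UNIV - {i}. m$i * m$j * cot (geodist th ph i j)) / 2"

definition equator :: "real^'n" where
  "equator = (\<chi> i. pi / 2)"

definition equator_fixed_point :: "real^'n \<Rightarrow> real^'n \<Rightarrow> bool" where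
  "equator_fixed_point m ph \<longleftrightarrow>
     (\<forall>i j. i \<noteq> j \<longrightarrow> geodist equator ph i j \<in> {0<..<pi}) \<and>
     ((\<lambda>p. forceV m (fst p) (snd p)) has_derivative (\<lambda>_. 0)) (at (equator, ph))"

definition matH :: "real^'n \<Rightarrow> real^'n \<Rightarrow> real^'n^'n" where
  "matH m ph = (\<chi> i j. let d = geodist equator ph in
      if i = j then - (\<Sum>k\<in>UNIV - {i}. m$i * m$k / (sin (d i k))^3 * cos (d i k))
      else m$i * m$j / (sin (d i j))^3)"

definition matG :: "real^'n \<Rightarrow> real^'n \<Rightarrow> real^'n^'n" where
  "matG m ph = (\<chi> i j. let d = geodist equator ph in
      if i = j then - (\<Sum>k\<in>UNIV - {i}. -2 * m$i * m$k * cos (d i k) / (sin (d i k))^3)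
      else -2 * m$i * m$j * cos (d i j) / (sin (d i j))^3)"

end

theory Submission imports Defs begin

definition FF :: "real \<Rightarrow> real" where "FF x = cos x / sqrt (1 - (cos x)^2)"
definition FD :: "real \<Rightarrow> real" where "FD x = - sin x / (sqrt (1 - (cos x)^2))^3"

lemma cot_arccos_cos: "cot (arccos (cos x)) = FF x"
  by (simp add: cot_def FF_def sin_arccos cos_arccos)

lemma FF_deriv:
  assumes "\<bar>cos x\<bar> < 1"
  shows "(FF has_real_derivative FD x) (at x)"
proof -
  have p: "0 < 1 - (cos x)^2" using assms by (simp add: abs_square_less_1)
  let ?s = "sqrt (1 - (cos x)^2)"
  have s2: "?s^2 = 1 - (cos x)^2" using p by simp
  have sp: "?s > 0" using p by simp
  have d1: "((\<lambda>x. 1 - (cos x)^2) has_real_derivative (2 * cos x * sin x)) (at x)"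
    by (auto intro!: derivative_eq_intros)
  have d2: "((\<lambda>x. sqrt (1 - (cos x)^2)) has_real_derivative (inverse ?s / 2 * (2 * cos x * sin x))) (at x)"
    using DERIV_chain2[OF DERIV_real_sqrt[OF p] d1] .
  have d3: "((\<lambda>x. cos x / sqrt (1 - (cos x)^2)) has_real_derivative
     ((- sin x) * ?s - cos x * (inverse ?s / 2 * (2 * cos x * sin x))) / (?s * ?s)) (at x)"
    using DERIV_divide[OF DERIV_cos d2] sp by simp
  have "((- sin x) * ?s - cos x * (inverse ?s / 2 * (2 * cos x * sin x))) / (?s * ?s) = FD x"
    unfolding FD_def using sp s2 sin_squared_eq[of x]
    by (simp add: field_simps power3_eq_cube power2_eq_square)
  with d3 show ?thesis unfolding FF_def[abs_def] by simp
qed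
lemma sum_antisym:
  fixes c :: "'n::finite \<Rightarrow> 'n \<Rightarrow> real" and i :: 'n
  assumes "\<And>a b. c b a = - c a b"
  shows "(\<Sum>a\<in>UNIV. \<Sum>b\<in>UNIV-{a}. c a b * ((if a = i then 1 else 0) - (if b = i then 1 else 0)))
     = 2 * (\<Sum>b\<in>UNIV-{i}. c i b)"
proof -
  have 1: "(\<Sum>a\<in>UNIV. \<Sum>b\<in>UNIV-{a}. c a b * (if a = i then 1 else 0)) = (\<Sum>b\<in>UNIV-{i}. c i b)"
  proof -
    have "\<And>a. (\<Sum>b\<in>UNIV-{a}. c a b * (if a = i then 1 else 0)) = (if a = i then (\<Sum>b\<in>UNIV-{a}. c a b) else 0)"
      by simp
    then have "(\<Sum>a\<in>UNIV. \<Sum>b\<in>UNIV-{a}. c a b * (if a = i then 1 else 0)) = (\<Sum>a\<in>UNIV. if a = i then (\<Sum>b\<in>UNIV-{a}. c a b) else 0)"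
      by presburger
    then show ?thesis by (simp only: sum.delta') simp
  qed
  have 2: "(\<Sum>a\<in>UNIV. \<Sum>b\<in>UNIV-{a}. c a b * (if b = i then 1 else 0)) = (\<Sum>a\<in>UNIV-{i}. c a i)"
  proof -
    have e: "\<And>a. (\<Sum>b\<in>UNIV-{a}. c a b * (if b = i then 1 else 0)) = (if a = i then 0 else c a i)"
    proof -
      fix a
      have "(\<Sum>b\<in>UNIV-{a}. c a b * (if b = i then 1 else 0)) = (\<Sum>b\<in>UNIV-{a}. if b = i then c a b else 0)"
        by (rule sum.cong) simp_all
      also have "\<dots> = (if i \<in> UNIV-{a} then c a i else 0)" by (rule sum.delta) simp
      finally show "?thesis a" by auto
    qed
    have "(\<Sum>a\<in>UNIV. if a = i then 0 else c a i) = (\<Sum>a\<in>UNIV-{i}. c a i)"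
      by (simp add: sum.If_cases Diff_eq Compl_eq)
    then show ?thesis by (simp only: e)
  qed
  have 3: "(\<Sum>a\<in>UNIV-{i}. c a i) = - (\<Sum>b\<in>UNIV-{i}. c i b)"
  proof -
    have "(\<Sum>a\<in>UNIV-{i}. c a i) = (\<Sum>a\<in>UNIV-{i}. - c i a)"
      by (rule sum.cong) (rule refl, rule assms)
    then show ?thesis by (simp add: sum_negf)
  qed
  have "(\<Sum>a\<in>UNIV. \<Sum>b\<in>UNIV-{a}. c a b * ((if a = i then 1 else 0) - (if b = i then 1 else 0)))
     = (\<Sum>a\<in>UNIV. \<Sum>b\<in>UNIV-{a}. c a b * (if a = i then 1 else 0)) - (\<Sum>a\<in>UNIV. \<Sum>b\<in>UNIV-{a}. c a b * (if b = i then 1 else 0))"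
    by (simp only: right_diff_distrib sum_subtractf)
  then show ?thesis using 1 2 3 by simp
qed

lemma geo_eq: "geodist equator p a b = arccos (cos (p$a - p$b))"
  by (simp add: geodist_def cosdist_def equator_def)

lemma forceV_eq: "forceV m equator p = (\<Sum>a\<in>UNIV. \<Sum>b\<in>UNIV-{a}. m$a*m$b*FF(p$a - p$b))/2"
  by (simp add: forceV_def geo_eq cot_arccos_cos)

lemma cos_lt1:
  assumes "geodist equator ph a b \<in> {0<..<pi}"
  shows "\<bar>cos (ph$a - ph$b)\<bar> < 1"
proof -
  let ?c = "cos (ph$a - ph$b)"
  have "?c \<noteq> 1" "?c \<noteq> -1" using assms by (auto simp: geo_eq)
  moreover have "\<bar>?c\<bar> \<le> 1" by simp
  ultimately show ?thesis by linarith
qed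

lemma FD_odd: "FD (-x) = - FD x"
  by (simp add: FD_def)

lemma fixed_key:
  fixes m ph :: "real^'n" and i :: 'n
  assumes fp: "equator_fixed_point m ph"
  shows "(\<Sum>j\<in>UNIV-{i}. m$i*m$j*FD(ph$i - ph$j)) = 0"
proof -
  define e where "e a = (if a = i then 1 else 0::real)" for a
  define g where "g t = (equator::real^'n, ph + t *\<^sub>R axis i (1::real))" for t::real
  have dg: "(g has_derivative (\<lambda>t. (0, t *\<^sub>R axis i 1))) (at 0)"
    unfolding g_def by (auto intro!: derivative_eq_intros)
  from fp have dV: "((\<lambda>p. forceV m (fst p) (snd p)) has_derivative (\<lambda>_. 0)) (at (equator, ph))"
    and dist: "\<And>a b. a \<noteq> b \<Longrightarrow> geodist equator ph a b \<in> {0<..<pi}"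
    unfolding equator_fixed_point_def by auto
  have g0: "g 0 = (equator, ph)" by (simp add: g_def)
  have "((\<lambda>t. forceV m (fst (g t)) (snd (g t))) has_derivative (\<lambda>_. 0)) (at 0)"
    using has_derivative_compose[OF dg, of "\<lambda>p. forceV m (fst p) (snd p)" "\<lambda>_. 0"] dV g0 by simp
  then have D0: "((\<lambda>t. forceV m (fst (g t)) (snd (g t))) has_real_derivative 0) (at 0)"
    by (rule has_derivative_imp_has_field_derivative) simp
  have geq: "(\<lambda>t. forceV m (fst (g t)) (snd (g t))) = (\<lambda>t. (\<Sum>a\<in>UNIV. \<Sum>b\<in>UNIV-{a}. m$a*m$b*FF(ph$a - ph$b + t*(e a - e b)))/2)"
  proof (rule ext)
    fix t
    have h: "\<And>a b. (ph + t *\<^sub>R axis i 1)$a - (ph + t *\<^sub>R axis i 1)$b = ph$a - ph$b + t*(e a - e b)"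
      by (simp add: e_def axis_def right_diff_distrib)
    show "forceV m (fst (g t)) (snd (g t)) = (\<Sum>a\<in>UNIV. \<Sum>b\<in>UNIV-{a}. m$a*m$b*FF(ph$a - ph$b + t*(e a - e b)))/2"
      by (simp only: g_def fst_conv snd_conv forceV_eq h)
  qed
  have trm: "((\<lambda>t. m$a*m$b*FF(ph$a - ph$b + t*(e a - e b))) has_real_derivative m$a*m$b*(FD(ph$a-ph$b)*(e a - e b))) (at 0)"
    if "b \<in> UNIV - {a}" for a b
  proof -
    have ab: "a \<noteq> b" using that by auto
    have FFd: "(FF has_real_derivative FD(ph$a-ph$b)) (at ((\<lambda>t. ph$a - ph$b + t*(e a - e b)) 0))"
      using FF_deriv[OF cos_lt1[OF dist[OF ab]]] by simp
    have hd: "((\<lambda>t. ph$a - ph$b + t*(e a - e b)) has_real_derivative (e a - e b)) (at 0)"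
      by (auto intro!: derivative_eq_intros)
    show ?thesis using DERIV_cmult[OF DERIV_chain2[OF FFd hd], of "m$a*m$b"] by simp
  qed
  have D1: "((\<lambda>t. (\<Sum>a\<in>UNIV. \<Sum>b\<in>UNIV-{a}. m$a*m$b*FF(ph$a - ph$b + t*(e a - e b)))/2) has_real_derivative
     (\<Sum>a\<in>UNIV. \<Sum>b\<in>UNIV-{a}. m$a*m$b*(FD(ph$a-ph$b)*(e a - e b)))/2) (at 0)"
    by (intro DERIV_cdivide DERIV_sum trm)
  have "(\<Sum>a\<in>UNIV. \<Sum>b\<in>UNIV-{a}. m$a*m$b*(FD(ph$a-ph$b)*(e a - e b)))/2 = 0"
    using DERIV_unique[OF D1 D0[unfolded geq]] by simp
  moreover have "(\<Sum>a\<in>UNIV. \<Sum>b\<in>UNIV-{a}. m$a*m$b*(FD(ph$a-ph$b)*(e a - e b)))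
     = 2 * (\<Sum>b\<in>UNIV-{i}. m$i*m$b*FD(ph$i-ph$b))"
    using sum_antisym[of "\<lambda>a b. m$a*m$b*FD(ph$a-ph$b)" i]
  proof -
    have anti: "\<And>a b. m$b*m$a*FD(ph$b-ph$a) = - (m$a*m$b*FD(ph$a-ph$b))"
      using FD_odd by (metis minus_diff_eq mult.commute mult_minus_right)
    have "(\<Sum>a\<in>UNIV. \<Sum>b\<in>UNIV-{a}. m$a*m$b*(FD(ph$a-ph$b)*(e a - e b)))
      = (\<Sum>a\<in>UNIV. \<Sum>b\<in>UNIV-{a}. m$a*m$b*FD(ph$a-ph$b)*((if a = i then 1 else 0) - (if b = i then 1 else 0)))"
      by (simp only: e_def mult.assoc)
    also have "\<dots> = 2 * (\<Sum>b\<in>UNIV-{i}. m$i*m$b*FD(ph$i-ph$b))"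
      by (rule sum_antisym[of "\<lambda>a b. m$a*m$b*FD(ph$a-ph$b)" i]) (rule anti)
    finally show ?thesis .
  qed
  ultimately show ?thesis by simp
qed


abbreviation ww :: "real^'n \<Rightarrow> real^'n \<Rightarrow> 'n \<Rightarrow> 'n \<Rightarrow> real" where
  "ww m ph i j \<equiv> m$i*m$j/(sqrt(1-(cos(ph$i-ph$j))^2))^3"

lemma matH_entry: "matH m ph $ i $ j = (if i = j then - (\<Sum>k\<in>UNIV-{i}. ww m ph i k * cos(ph$i-ph$k)) else ww m ph i j)"
  by (simp add: matH_def geo_eq sin_arccos cos_arccos Let_def)

lemma matH_row: "(matH m ph *v v)$i = (\<Sum>j\<in>UNIV-{i}. ww m ph i j * (v$j - cos(ph$i-ph$j) * v$i))"
proof -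
  have 1: "(matH m ph *v v)$i = matH m ph $ i $ i * v$i + (\<Sum>j\<in>UNIV-{i}. matH m ph $ i $ j * v$j)"
    unfolding matrix_vector_mult_def by (simp add: sum.remove[of UNIV i])
  have 2: "(\<Sum>j\<in>UNIV-{i}. matH m ph $ i $ j * v$j) = (\<Sum>j\<in>UNIV-{i}. ww m ph i j * v$j)"
    by (rule sum.cong) (auto simp: matH_entry)
  have 3: "matH m ph $ i $ i = - (\<Sum>k\<in>UNIV-{i}. ww m ph i k * cos(ph$i-ph$k))"
    by (simp add: matH_entry)
  have 4: "(\<Sum>j\<in>UNIV-{i}. ww m ph i j * (v$j - cos(ph$i-ph$j) * v$i)) =
     (\<Sum>j\<in>UNIV-{i}. ww m ph i j * v$j) - (\<Sum>k\<in>UNIV-{i}. ww m ph i k * cos(ph$i-ph$k)) * v$i"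
    by (simp add: right_diff_distrib sum_subtractf sum_distrib_right mult.assoc)
  show ?thesis unfolding 1 2 3 4 by simp
qed

lemma key2:
  assumes "equator_fixed_point m ph"
  shows "(\<Sum>j\<in>UNIV-{i}. ww m ph i j * sin(ph$i-ph$j)) = 0"
proof -
  have "(\<Sum>j\<in>UNIV-{i}. ww m ph i j * sin(ph$i-ph$j)) = - (\<Sum>j\<in>UNIV-{i}. m$i*m$j*FD(ph$i - ph$j))"
    by (simp add: FD_def sum_negf[symmetric])
  then show ?thesis using fixed_key[OF assms] by simp
qed

lemma trig1: "cos((b::real) - k) - cos(a - b) * cos(a - k) = sin(a - b) * sin(a - k)"
proof -
  have "cos(b - k) = cos(a-k) * cos(a-b) + sin(a-k) * sin(a-b)"
    using cos_diff[of "a-k" "a-b"] by simp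
  then show ?thesis by simp
qed
lemma trig2: "sin((b::real) - k) - cos(a - b) * sin(a - k) = - (sin(a - b) * cos(a - k))"
proof -
  have "sin(b - k) = sin(a-k) * cos(a-b) - cos(a-k) * sin(a-b)"
    using sin_diff[of "a-k" "a-b"] by simp
  then show ?thesis by simp
qed

theorem lemma3:
  fixes m ph :: "real^'n" and k :: 'n
  assumes "CARD('n) \<ge> 3"
    and "\<forall>i. m$i > 0"
    and "equator_fixed_point m ph"
  shows "matH m ph *v (\<chi> i. cos (ph$i - ph$k)) = 0 \<and>
         matH m ph *v (\<chi> i. sin (ph$i - ph$k)) = 0 \<and>
         matG m ph *v (\<chi> i. 1) = 0"
proof (intro conjI)
  show "matH m ph *v (\<chi> i. cos (ph$i - ph$k)) = 0"
  proof (rule iffD2[OF vec_eq_iff], rule allI)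
    fix i
    have "(matH m ph *v (\<chi> i. cos (ph$i - ph$k)))$i = (\<Sum>j\<in>UNIV-{i}. ww m ph i j * sin(ph$i-ph$j)) * sin(ph$i-ph$k)"
      by (simp add: matH_row trig1 sum_distrib_right mult.assoc)
    then show "(matH m ph *v (\<chi> i. cos (ph$i - ph$k)))$i = 0$i"
      using key2[OF assms(3)] by simp
  qed
  show "matH m ph *v (\<chi> i. sin (ph$i - ph$k)) = 0"
  proof (rule iffD2[OF vec_eq_iff], rule allI)
    fix i
    have "(matH m ph *v (\<chi> i. sin (ph$i - ph$k)))$i = - ((\<Sum>j\<in>UNIV-{i}. ww m ph i j * sin(ph$i-ph$j)) * cos(ph$i-ph$k))"
      by (simp add: matH_row trig2 sum_distrib_right mult.assoc sum_negf)
    then show "(matH m ph *v (\<chi> i. sin (ph$i - ph$k)))$i = 0$i"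
      using key2[OF assms(3)] by simp
  qed
  show "matG m ph *v (\<chi> i. 1) = 0"
  proof (rule iffD2[OF vec_eq_iff], rule allI)
    fix i
    have "(matG m ph *v (\<chi> i. 1))$i = matG m ph $ i $ i + (\<Sum>j\<in>UNIV-{i}. matG m ph $ i $ j)"
      unfolding matrix_vector_mult_def by (simp add: sum.remove[of UNIV i])
    also have "(\<Sum>j\<in>UNIV-{i}. matG m ph $ i $ j) = (\<Sum>j\<in>UNIV-{i}. -2 * m$i * m$j * cos (geodist equator ph i j) / (sin (geodist equator ph i j))^3)"
      by (rule sum.cong) (auto simp: matG_def Let_def)
    finally show "(matG m ph *v (\<chi> i. 1))$i = 0$i"
      by (simp add: matG_def Let_def)
  qed
qed
end
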